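(* Let $\nu>0$, $\Delta t>0$, $\lambda>0$, and let $$\mu_\pm(\theta):=C_2(\Delta t)\cos\theta\pm i\sqrt{\big(C_2(\Delta t)\sin\theta\big)^2+\nu\,C_1(\Delta t)^2},\qquad \theta\in[-\pi,\pi],$$ and $\Sigma:=\{\mu_+(\theta):\theta\in[-\pi,\pi]\}\cup\{\mu_-(\theta):\theta\in[-\pi,\pi]\}\subset\mathbb C$. Then $\Sigma$ is an eigenvalue cluster for the sequence $\{T^{\mathrm{PS}}_N\}_{N\ge2}$: for every open set $\mathcal O\subset\mathbb C$ with $\Sigma\subset\mathcal O$, the number of eigenvalues of $T^{\mathrm{PS}}_N$ (counted with multiplicity) lying outside $\mathcal O$ is $o(N)$ as $N\to\infty$.
   Context: Fix $\nu>0$, $\Delta t>0$, $\lambda>0$ and set $\sigma:=\sqrt{\lambda^2+1/\nu}$. Define $$C_1(\Delta t):=\frac{-\nu^{-1}\sinh(\sigma\Delta t)}{\sigma\cosh(\sigma\Delta t)+\lambda\sinh(\sigma\Delta t)},\qquad C_2(\Delta t):=\frac{\sigma}{\sigma\cosh(\sigma\Delta t)+\lambda\sinh(\sigma\Delta t)}.$$ Define the $2\times 2$ blocks $$T_l:=\begin{pmatrix}0&0\\0&C_2(\Delta t)\end{pmatrix},\quad T_d:=\begin{pmatrix}0&C_1(\Delta t)\\-\nu C_1(\Delta t)&0\end{pmatrix},\quad T_r:=\begin{pmatrix}C_2(\Delta t)&0\\0&0\end{pmatrix}.$$ For an integer $N\ge 2$, $T^{\mathrm{PS}}_N\in\mathbb{R}^{2(N-1)\times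 2(N-1)}$ is the block tridiagonal block Toeplitz matrix with $N-1$ block rows whose diagonal blocks are $T_d$, superdiagonal blocks are $T_r$ and subdiagonal blocks are $T_l$. The set $\Sigma$ equals the spectrum of the associated bi-infinite block Laurent operator on $\ell^2(\mathbb Z,\mathbb C^2)$, i.e. the union over $\theta$ of the eigenvalues of the symbol $F(\theta)=T_r e^{-i\theta}+T_d+T_l e^{i\theta}$. *)

theory Defs
  imports Complex_Main "Jordan_Normal_Form.Char_Poly" "HOL-Library.Landau_Symbols"
begin

definition sigmaPS :: "real \<Rightarrow> real \<Rightarrow> real" where
  "sigmaPS \<nu> lam = sqrt (lam\<^sup>2 + 1 / \<nu>)"

definition C1 :: "real \<Rightarrow> real \<Rightarrow> real \<Rightarrow> real" where
  "C1 \<nu> lam dt = (let \<sigma> = sigmaPS \<nu> lam in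
     (- (1/\<nu>) * sinh (\<sigma> * dt)) / (\<sigma> * cosh (\<sigma> * dt) + lam * sinh (\<sigma> * dt)))"

definition C2 :: "real \<Rightarrow> real \<Rightarrow> real \<Rightarrow> real" where
  "C2 \<nu> lam dt = (let \<sigma> = sigmaPS \<nu> lam in
     \<sigma> / (\<sigma> * cosh (\<sigma> * dt) + lam * sinh (\<sigma> * dt)))"

definition Tl :: "real \<Rightarrow> real \<Rightarrow> real \<Rightarrow> nat \<Rightarrow> nat \<Rightarrow> real" where
  "Tl \<nu> lam dt a b = (if a = 1 \<and> b = 1 then C2 \<nu> lam dt else 0)"

definition Td :: "real \<Rightarrow> real \<Rightarrow> real \<Rightarrow> nat \<Rightarrow> nat \<Rightarrow> real" where
  "Td \<nu> lam dt a b = (if a = 0 \<and> b = 1 then C1 \<nu> lam dt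
                      else if a = 1 \<and> b = 0 then - \<nu> * C1 \<nu> lam dt else 0)"

definition Tr :: "real \<Rightarrow> real \<Rightarrow> real \<Rightarrow> nat \<Rightarrow> nat \<Rightarrow> real" where
  "Tr \<nu> lam dt a b = (if a = 0 \<and> b = 0 then C2 \<nu> lam dt else 0)"

definition TPS :: "real \<Rightarrow> real \<Rightarrow> real \<Rightarrow> nat \<Rightarrow> real mat" where
  "TPS \<nu> lam dt N = mat (2 * (N - 1)) (2 * (N - 1)) (\<lambda>(i, j).
     (let p = i div 2; a = i mod 2; q = j div 2; b = j mod 2 in
      if q = p then Td \<nu> lam dt a b
      else if q = p + 1 then Tr \<nu> lam dt a b
      else if p = q + 1 then Tl \<nu> lam dt a b
      else 0))"

definition mu_plus :: "real \<Rightarrow> real \<Rightarrow> real \<Rightarrow> real \<Rightarrow> complex" where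
  "mu_plus \<nu> lam dt \<theta> = complex_of_real (C2 \<nu> lam dt * cos \<theta>)
     + \<i> * complex_of_real (sqrt ((C2 \<nu> lam dt * sin \<theta>)\<^sup>2 + \<nu> * (C1 \<nu> lam dt)\<^sup>2))"

definition mu_minus :: "real \<Rightarrow> real \<Rightarrow> real \<Rightarrow> real \<Rightarrow> complex" where
  "mu_minus \<nu> lam dt \<theta> = complex_of_real (C2 \<nu> lam dt * cos \<theta>)
     - \<i> * complex_of_real (sqrt ((C2 \<nu> lam dt * sin \<theta>)\<^sup>2 + \<nu> * (C1 \<nu> lam dt)\<^sup>2))"

definition SigmaPS :: "real \<Rightarrow> real \<Rightarrow> real \<Rightarrow> complex set" where
  "SigmaPS \<nu> lam dt = mu_plus \<nu> lam dt ` {-pi..pi} \<union> mu_minus \<nu> lam dt ` {-pi..pi}"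

definition eig_count_outside :: "real mat \<Rightarrow> complex set \<Rightarrow> nat" where
  "eig_count_outside A U =
     (let p = char_poly (map_mat complex_of_real A) in
      \<Sum>z\<in>{z. poly p z = 0 \<and> z \<notin> U}. order z p)"

end

theory Submission
  imports Defs "HOL-Analysis.Analysis"
begin

lemma step_L:
  fixes c C nu mu u X0 X1 Y0 Yp :: complex
  assumes c: "c \<noteq> 0"
  and q: "u * (mu^2 + (c^2 + nu*C^2)) = c*mu*(1 + u^2)"
  and e1: "c*X1 = mu*X0 - C*Y0"
  and e2: "mu*Y0 = -(nu*C)*X0 + c*Yp"
  shows "(c - mu*u)*X1 + C*Y0 = u*((c - mu*u)*X0 + C*Yp)"
proof -
  have "c*((c - mu*u)*X1 + C*Y0) = (c - mu*u)*(c*X1) + C*c*Y0" by (simp add: algebra_simps power2_eq_square)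
  also have "\<dots> = (c-mu*u)*(mu*X0 - C*Y0) + C*c*Y0" using e1 by simp
  also have "\<dots> = (c-mu*u)*mu*X0 + u*C*(mu*Y0)" by (simp add: algebra_simps power2_eq_square)
  also have "\<dots> = (c-mu*u)*mu*X0 + u*C*(-(nu*C)*X0 + c*Yp)" using e2 by simp
  also have "\<dots> = X0*(c*mu*(1+u^2) - u*(mu^2 + (c^2+nu*C^2))) + c*(u*((c - mu*u)*X0 + C*Yp))" by (simp add: algebra_simps power2_eq_square)
  also have "\<dots> = c*(u*((c - mu*u)*X0 + C*Yp))" using q by simp
  finally show ?thesis using c by simp
qed

lemma L_pow:
  fixes c C nu mu u :: complex and x y :: "nat \<Rightarrow> complex" and n :: nat
  assumes c: "c \<noteq> 0"
  and q: "u * (mu^2 + (c^2 + nu*C^2)) = c*mu*(1 + u^2)"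
  and E1: "\<And>p. p < n \<Longrightarrow> mu * x p = C * y p + (if p+1 < n then c * x (p+1) else 0)"
  and E2: "\<And>p. p < n \<Longrightarrow> mu * y p = -(nu*C) * x p + (if p > 0 then c * y (p-1) else 0)"
  shows "p \<le> n \<Longrightarrow> (c - mu*u) * (if p < n then x p else 0) + C * (if p = 0 then 0 else y (p-1))
     = u^p * ((c - mu*u) * (if 0 < n then x 0 else 0))"
proof (induction p)
  case 0
  then show ?case by simp
next
  case (Suc p)
  have pn: "p < n" using Suc.prems by simp
  have "(c - mu*u) * (if Suc p < n then x (Suc p) else 0) + C * y p
      = u*((c - mu*u) * x p + C * (if p = 0 then 0 else y (p-1)))"
  proof (rule step_L[OF c q])
    show "c * (if Suc p < n then x (Suc p) else 0) = mu * x p - C * y p"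
      using E1[OF pn] by auto
    show "mu * y p = - (nu * C) * x p + c * (if p = 0 then 0 else y (p - 1))"
      using E2[OF pn] by auto
  qed
  also have "\<dots> = u * (u^p * ((c - mu*u) * (if 0 < n then x 0 else 0)))"
    using Suc.IH pn by simp
  finally show ?case by simp
qed

lemma mu_nonzero:
  fixes c C nu :: real and mu :: complex and x y :: "nat \<Rightarrow> complex" and n :: nat
  assumes cpos: "c > 0" and Cnz: "C \<noteq> 0" and nupos: "nu > 0"
  and E1: "\<And>p. p < n \<Longrightarrow> mu * x p = of_real C * y p + (if p+1 < n then of_real c * x (p+1) else 0)"
  and E2: "\<And>p. p < n \<Longrightarrow> mu * y p = -(of_real nu * of_real C) * x p + (if p > 0 then of_real c * y (p-1) else 0)"
  and nz: "\<exists>p<n. x p \<noteq> 0 \<or> y p \<noteq> 0"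
  shows "mu \<noteq> 0"
proof
  assume m0: "mu = 0"
  have nuC: "complex_of_real nu * complex_of_real C \<noteq> 0" using Cnz nupos by simp
  have den: "complex_of_real (c^2 + nu*C^2) \<noteq> 0"
  proof -
    have "c^2 + nu*C^2 > 0" using cpos nupos by (simp add: add_pos_nonneg)
    then show ?thesis by (simp del: of_real_add)
  qed
  have xz: "p < n \<Longrightarrow> x p = 0" for p
  proof (induction p)
    case 0
    then show ?case using E2[of 0] m0 nuC by simp
  next
    case (Suc p)
    have a: "0 = of_real C * y p + of_real c * x (Suc p)" using E1[of p] Suc.prems m0 by simp
    have b: "0 = -(of_real nu * of_real C) * x (Suc p) + of_real c * y p" using E2[of "Suc p"] Suc.prems m0 by simp
    have "complex_of_real (c^2 + nu*C^2) * x (Suc p) = of_real c * (of_real C * y p + of_real c * x (Suc p))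
             - of_real C * (-(of_real nu * of_real C) * x (Suc p) + of_real c * y p)"
      by (simp add: algebra_simps power2_eq_square)
    also have "\<dots> = 0" using a b by simp
    finally show ?case using den by simp
  qed
  have yz: "p < n \<Longrightarrow> y p = 0" for p
  proof (cases "p + 1 < n")
    case True
    assume pn: "p < n"
    have "0 = -(of_real nu * of_real C) * x (Suc p) + of_real c * y p" using E2[of "Suc p"] True m0 by simp
    then show ?thesis using xz[of "Suc p"] True cpos by simp
  next
    case False
    assume pn: "p < n"
    have "0 = of_real C * y p" using E1[of p] pn False m0 by simp
    then show ?thesis using Cnz by simp
  qed
  show False using nz xz yz by blast
qed

lemma roots_exist:
  fixes s :: complex
  obtains w w' where "w * w' = 1" "w + w' = s" "cmod w \<ge> 1"
proof -
  define w1 where "w1 = (s + csqrt (s^2 - 4))/2"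
  define w2 where "w2 = (s - csqrt (s^2 - 4))/2"
  have p: "w1 * w2 = 1"
  proof -
    have "w1 * w2 = (s^2 - (csqrt (s^2 - 4))^2)/4" unfolding w1_def w2_def
      by (simp add: algebra_simps power2_eq_square)
    also have "\<dots> = 1" by simp
    finally show ?thesis .
  qed
  have sm: "w1 + w2 = s" unfolding w1_def w2_def by (simp add: field_simps)
  show ?thesis
  proof (cases "cmod w1 \<ge> 1")
    case True then show ?thesis using that p sm by blast
  next
    case False
    have "cmod w1 * cmod w2 = 1" using p by (metis norm_mult norm_one)
    then have "cmod w2 \<ge> 1" using False
      using mult_strict_mono[of "cmod w1" 1 "cmod w2" 1] by (smt (verit) norm_ge_zero)
    then show ?thesis using that[of w2 w1] p sm by (simp add: mult.commute add.commute)
  qed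
qed

lemma eig_near:
  fixes c C nu :: real and mu :: complex and x y :: "nat \<Rightarrow> complex" and n :: nat
  assumes cpos: "c > 0" and Cnz: "C \<noteq> 0" and nupos: "nu > 0" and n1: "n \<ge> 1"
  and E1: "\<And>p. p < n \<Longrightarrow> mu * x p = of_real C * y p + (if p+1 < n then of_real c * x (p+1) else 0)"
  and E2: "\<And>p. p < n \<Longrightarrow> mu * y p = -(of_real nu * of_real C) * x p + (if p > 0 then of_real c * y (p-1) else 0)"
  and nz: "\<exists>p<n. x p \<noteq> 0 \<or> y p \<noteq> 0"
  shows "\<exists>\<theta>\<in>{-pi..pi}.
     (cmod (mu - (complex_of_real (c * cos \<theta>) + \<i> * complex_of_real (sqrt ((c * sin \<theta>)\<^sup>2 + nu * C\<^sup>2)))))\<^sup>2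
        \<le> 2*c*(c + sqrt nu * \<bar>C\<bar>)*(2*c/(sqrt nu * \<bar>C\<bar>))/real n
   \<or> (cmod (mu - (complex_of_real (c * cos \<theta>) - \<i> * complex_of_real (sqrt ((c * sin \<theta>)\<^sup>2 + nu * C\<^sup>2)))))\<^sup>2
        \<le> 2*c*(c + sqrt nu * \<bar>C\<bar>)*(2*c/(sqrt nu * \<bar>C\<bar>))/real n"
proof -
  define a where "a = sqrt nu * \<bar>C\<bar>"
  have apos: "a > 0" unfolding a_def using nupos Cnz by simp
  have a2: "a^2 = nu * C^2" unfolding a_def using nupos by (simp add: power_mult_distrib)
  define cc where "cc = complex_of_real c"
  define CC where "CC = complex_of_real C"
  define nn where "nn = complex_of_real nu"
  define R2 where "R2 = cc^2 + nn*CC^2"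
  have R2r: "R2 = complex_of_real (c^2 + nu*C^2)" unfolding R2_def cc_def nn_def CC_def by simp
  have mu0: "mu \<noteq> 0" by (rule mu_nonzero[OF cpos Cnz nupos E1 E2 nz])
  have cc0: "cc \<noteq> 0" unfolding cc_def using cpos by simp
  define sv where "sv = (mu^2 + R2)/(cc*mu)"
  have sdef: "cc*mu * sv = mu^2 + R2" unfolding sv_def using mu0 cc0 by simp
  obtain w w' where ww: "w * w' = 1" and sw: "w + w' = sv" and w1: "cmod w \<ge> 1"
    using roots_exist[of sv] by blast
  have qw: "w * (mu^2 + (cc^2 + nn*CC^2)) = cc*mu*(1 + w^2)"
  proof -
    have "w * sv = w^2 + w*w'" using sw[symmetric] by (simp add: algebra_simps power2_eq_square)
    then have h: "1 + w^2 = w * sv" using ww by (simp add: mult.commute)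
    have "w * (mu^2 + (cc^2 + nn*CC^2)) = w*(cc*mu * sv)" using sdef unfolding R2_def by simp
    also have "\<dots> = cc*mu*(w * sv)" by (simp add: ac_simps)
    finally show ?thesis using h by simp
  qed
  have qw': "w' * (mu^2 + (cc^2 + nn*CC^2)) = cc*mu*(1 + w'^2)"
  proof -
    have "w' * sv = w'^2 + w*w'" using sw[symmetric] by (simp add: algebra_simps power2_eq_square)
    then have h: "1 + w'^2 = w' * sv" using ww by (simp add: mult.commute)
    have "w' * (mu^2 + (cc^2 + nn*CC^2)) = w'*(cc*mu * sv)" using sdef unfolding R2_def by simp
    also have "\<dots> = cc*mu*(w' * sv)" by (simp add: ac_simps)
    finally show ?thesis using h by simp
  qed
  have E1': "\<And>p. p < n \<Longrightarrow> mu * x p = CC * y p + (if p+1 < n then cc * x (p+1) else 0)"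
    using E1 unfolding CC_def cc_def by simp
  have E2': "\<And>p. p < n \<Longrightarrow> mu * y p = -(nn * CC) * x p + (if p > 0 then cc * y (p-1) else 0)"
    using E2 unfolding CC_def cc_def nn_def by simp
  have Lw: "(cc - mu*w) * (if p < n then x p else 0) + CC * (if p = 0 then 0 else y (p-1))
     = w^p * ((cc - mu*w) * (if 0 < n then x 0 else 0))" if "p \<le> n" for p
    by (rule L_pow[OF cc0 qw, of n x y]) (use E1' E2' that in auto)
  have Lw': "(cc - mu*w') * (if p < n then x p else 0) + CC * (if p = 0 then 0 else y (p-1))
     = w'^p * ((cc - mu*w') * (if 0 < n then x 0 else 0))" if "p \<le> n" for p
    by (rule L_pow[OF cc0 qw', of n x y]) (use E1' E2' that in auto)
  have n0: "0 < n" using n1 by simp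
  have Lwn: "CC * y (n-1) = w^n * ((cc - mu*w) * x 0)" using Lw[of n] n0 by simp
  have Lwn': "CC * y (n-1) = w'^n * ((cc - mu*w') * x 0)" using Lw'[of n] n0 by simp
  define \<rho> where "\<rho> = cmod w"
  have rho1: "\<rho> \<ge> 1" unfolding \<rho>_def using w1 .
  have key: "\<rho>^n \<le> 1 + 2*c/a \<and> (\<rho> = 1 \<or> cmod mu \<le> c + a)"
  proof (cases "w = w'")
    case True
    have "\<rho> * \<rho> = 1" unfolding \<rho>_def using ww True by (metis norm_mult norm_one)
    moreover have "1*\<rho> \<le> \<rho>*\<rho>" by (rule mult_right_mono[OF rho1]) (use rho1 in simp)
    ultimately have "\<rho> = 1" using rho1 by linarith
    then show ?thesis using apos cpos by simp
  next
    case False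
    have x0: "x 0 \<noteq> 0"
    proof
      assume x00: "x 0 = 0"
      have Xz: "p \<le> n \<Longrightarrow> (if p < n then x p else 0) = 0 \<and> (if p = 0 then 0 else y (p-1)) = 0" for p
      proof -
        assume pn: "p \<le> n"
        define X where "X = (if p < n then x p else 0)"
        define Y where "Y = (if p = 0 then 0 else y (p-1))"
        have h1: "(cc - mu*w)*X + CC*Y = 0" using Lw[OF pn] x00 unfolding X_def Y_def by simp
        have h2: "(cc - mu*w')*X + CC*Y = 0" using Lw'[OF pn] x00 unfolding X_def Y_def by simp
        have "mu*(w' - w)*X = ((cc - mu*w)*X + CC*Y) - ((cc - mu*w')*X + CC*Y)" by (simp add: algebra_simps)
        then have "mu*(w' - w)*X = 0" using h1 h2 by simp
        then have X0: "X = 0" using mu0 False by simp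
        then have "CC*Y = 0" using h1 by simp
        then have "Y = 0" unfolding CC_def using Cnz by simp
        then show ?thesis using X0 unfolding X_def Y_def by simp
      qed
      have "\<forall>p<n. x p = 0 \<and> y p = 0"
      proof (intro allI impI)
        fix p assume "p < n"
        then show "x p = 0 \<and> y p = 0" using Xz[of p] Xz[of "Suc p"] by simp
      qed
      then show False using nz by blast
    qed
    have eq: "w^n * (cc - mu*w) = w'^n * (cc - mu*w')"
    proof -
      have "(w^n * (cc - mu*w)) * x 0 = (w'^n * (cc - mu*w')) * x 0" using Lwn Lwn' by (simp add: mult.assoc)
      then show ?thesis using x0 by simp
    qed
    define \<eta> where "\<eta> = mu*w - cc"
    have eta_id: "\<eta>*(cc - mu*w') = nn*CC^2"
    proof -
      have "\<eta>*(cc - mu*w') = cc*mu*(w+w') - mu^2*(w*w') - cc^2"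
        unfolding \<eta>_def by (simp add: algebra_simps power2_eq_square)
      also have "\<dots> = nn*CC^2" using sw ww sdef unfolding R2_def by simp
      finally show ?thesis .
    qed
    have w2n: "w^(2*n) = w^n * w^n" by (simp add: mult_2 power_add)
    have e2: "-\<eta> * w^(2*n) = cc - mu*w'"
    proof -
      have "-\<eta> * w^(2*n) = w^n * (w^n * (cc - mu*w))"
        unfolding \<eta>_def w2n by (simp add: algebra_simps)
      also have "\<dots> = (w*w')^n * (cc - mu*w')" using eq by (simp add: power_mult_distrib)
      also have "\<dots> = cc - mu*w'" using ww by simp
      finally show ?thesis .
    qed
    have N1: "cmod (cc - mu*w') = cmod \<eta> * \<rho>^(2*n)"
      using e2[symmetric] unfolding \<rho>_def by (simp add: norm_mult norm_power)
    have N2: "cmod \<eta> * cmod (cc - mu*w') = a^2"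
    proof -
      have "cmod (\<eta>*(cc - mu*w')) = cmod (complex_of_real (nu*C^2))" using eta_id unfolding nn_def CC_def by simp
      also have "\<dots> = nu*C^2" using nupos by (simp add: norm_mult norm_power del: of_real_mult of_real_power)
      finally show ?thesis using a2 by (simp add: norm_mult)
    qed
    have r2n: "\<rho>^(2*n) = \<rho>^n * \<rho>^n" by (simp add: mult_2 power_add)
    have "(cmod \<eta> * \<rho>^n)^2 = cmod \<eta> * (cmod \<eta> * (\<rho>^n * \<rho>^n))" by (simp add: power2_eq_square ac_simps)
    also have "\<dots> = cmod \<eta> * cmod (cc - mu*w')" by (simp only: N1 r2n)
    also have "\<dots> = a^2" using N2 by simp
    finally have sq: "(cmod \<eta> * \<rho>^n)^2 = a^2" .
    have nn0: "0 \<le> cmod \<eta> * \<rho>^n" using rho1 by simp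
    have N3: "cmod \<eta> * \<rho>^n = a"
      using power2_eq_imp_eq[OF sq nn0] apos by linarith
    have rn1: "\<rho>^n \<ge> 1" using rho1 by (rule one_le_power)
    have eta_le: "cmod \<eta> \<le> a"
    proof -
      have "cmod \<eta> * 1 \<le> cmod \<eta> * \<rho>^n" by (rule mult_left_mono[OF rn1]) simp
      then show ?thesis using N3 by simp
    qed
    have "cmod mu * \<rho> = cmod (\<eta> + cc)" unfolding \<rho>_def \<eta>_def by (simp add: norm_mult)
    also have "\<dots> \<le> cmod \<eta> + c" using norm_triangle_ineq[of \<eta> cc] cpos unfolding cc_def by simp
    finally have mur: "cmod mu * \<rho> \<le> c + a" using eta_le by simp
    have "cmod mu * 1 \<le> cmod mu * \<rho>" by (rule mult_left_mono[OF rho1]) simp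
    then have mu_le: "cmod mu \<le> c + a" using mur by simp
    have w'r: "cmod w' * \<rho> = 1"
    proof -
      have "cmod (w' * w) = 1" using ww by (simp add: mult.commute)
      then show ?thesis unfolding \<rho>_def by (simp add: norm_mult)
    qed
    have w'le: "cmod w' \<le> 1"
    proof -
      have "cmod w' * 1 \<le> cmod w' * \<rho>" by (rule mult_left_mono[OF rho1]) simp
      then show ?thesis using w'r by simp
    qed
    have muw': "cmod (mu*w') \<le> c + a"
    proof -
      have "cmod (mu*w') = cmod mu * cmod w'" by (simp add: norm_mult)
      also have "\<dots> \<le> cmod mu * 1" by (rule mult_left_mono[OF w'le]) simp
      finally show ?thesis using mu_le by simp
    qed
    have "a * \<rho>^n = cmod \<eta> * \<rho>^n * \<rho>^n" using N3 by simp
    also have "\<dots> = cmod (cc - mu*w')" by (simp only: N1 r2n mult.assoc)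
    finally have "a * \<rho>^n = cmod (cc - mu*w')" .
    also have "\<dots> \<le> cmod cc + cmod (mu*w')" by (rule norm_triangle_ineq4)
    also have "\<dots> \<le> c + (c + a)" using muw' cpos unfolding cc_def by simp
    finally have "a * \<rho>^n \<le> 2*c + a" by simp
    then have "\<rho>^n \<le> 1 + 2*c/a" using apos by (simp add: field_simps)
    then show ?thesis using mu_le by simp
  qed
  from key have rn: "\<rho>^n \<le> 1 + 2*c/a" and disj: "\<rho> = 1 \<or> cmod mu \<le> c + a" by auto
  have bern: "1 + real n * (\<rho> - 1) \<le> \<rho>^n" using Bernoulli_inequality[of "\<rho> - 1" n] rho1 by simp
  have "real n * (\<rho> - 1) \<le> 2*c/a" using bern rn by linarith
  then have rdm: "(\<rho> - 1) * real n \<le> 2*c/a" by (simp add: mult.commute)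
  have n0r: "real n > 0" using n0 by simp
  have rd: "\<rho> - 1 \<le> (2*c/a)/real n" using pos_le_divide_eq[OF n0r] rdm by blast
  define \<theta> where "\<theta> = Arg w"
  have th: "\<theta> \<in> {-pi..pi}" unfolding \<theta>_def using Arg_bounded[of w] by auto
  have wr: "w = complex_of_real \<rho> * cis \<theta>" using rcis_cmod_Arg[of w] by (simp add: rcis_def \<rho>_def \<theta>_def)
  have rho0: "\<rho> \<noteq> 0" using rho1 by simp
  have w'i: "w' = inverse w" using ww by (simp add: inverse_unique)
  have w'r: "w' = complex_of_real (1/\<rho>) * cis (-\<theta>)"
    unfolding w'i wr using rho0 by (simp add: inverse_mult_distrib cis_inverse divide_inverse mult.commute)
  define s0 where "s0 = cis \<theta> + cis (-\<theta>)"
  have s0r: "s0 = complex_of_real (2*cos \<theta>)" by (simp add: complex_eq_iff s0_def)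
  have ds: "sv - s0 = complex_of_real (\<rho>-1) * cis \<theta> + complex_of_real (1/\<rho> - 1) * cis (-\<theta>)"
    using sw[symmetric] unfolding wr w'r s0_def by (simp add: algebra_simps)
  have h: "(2 - \<rho>)*\<rho> \<le> 1"
  proof -
    have "0 \<le> (\<rho>-1)^2" by simp
    then show ?thesis by (simp add: power2_eq_square algebra_simps)
  qed
  have h2: "2 - \<rho> \<le> 1/\<rho>" using h rho1 by (simp add: pos_le_divide_eq)
  have h3: "1/\<rho> \<le> 1" using rho1 by simp
  have nds: "cmod (sv - s0) \<le> 2*(\<rho> - 1)"
  proof -
    have "cmod (sv - s0) \<le> cmod (complex_of_real (\<rho>-1) * cis \<theta>) + cmod (complex_of_real (1/\<rho> - 1) * cis (-\<theta>))"
      unfolding ds by (rule norm_triangle_ineq)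
    also have "\<dots> = \<bar>\<rho>-1\<bar> + \<bar>1/\<rho> - 1\<bar>" by (simp only: norm_mult norm_of_real norm_cis mult_1_right)
    also have "\<dots> \<le> 2*(\<rho> - 1)"
    proof -
      define t where "t = 1/\<rho>"
      have e1: "\<bar>\<rho>-1\<bar> = \<rho>-1" using rho1 by simp
      have e2: "\<bar>t - 1\<bar> = 1 - t" using h3 unfolding t_def by simp
      have e3: "2 - \<rho> \<le> t" using h2 unfolding t_def by simp
      have "\<bar>\<rho>-1\<bar> + \<bar>t - 1\<bar> \<le> 2*(\<rho> - 1)" unfolding e1 e2 using e3 by simp
      then show ?thesis unfolding t_def .
    qed
    finally show ?thesis .
  qed
  define S where "S = sqrt ((c * sin \<theta>)\<^sup>2 + nu * C\<^sup>2)"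
  define mp where "mp = complex_of_real (c * cos \<theta>) + \<i> * complex_of_real S"
  define mm where "mm = complex_of_real (c * cos \<theta>) - \<i> * complex_of_real S"
  have S2: "S^2 = (c * sin \<theta>)\<^sup>2 + nu * C\<^sup>2" unfolding S_def using nupos by simp
  have trig: "(c * cos \<theta>)^2 + (c * sin \<theta>)^2 = c^2"
  proof -
    have "(c * cos \<theta>)^2 + (c * sin \<theta>)^2 = c^2 * ((sin \<theta>)^2 + (cos \<theta>)^2)" by (simp only: power_mult_distrib distrib_left add.commute)
    also have "\<dots> = c^2" by simp
    finally show ?thesis .
  qed
  have pm: "mp + mm = complex_of_real (2 * c * cos \<theta>)" unfolding mp_def mm_def by simp
  have pp: "mp * mm = complex_of_real ((c * cos \<theta>)^2 + S^2)"
    unfolding mp_def mm_def by (simp add: complex_eq_iff power2_eq_square)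
  have pp2: "mp * mm = R2" unfolding pp S2 R2r using trig by (simp add: algebra_simps)
  have fac: "(mu - mp)*(mu - mm) = cc*mu*(sv - s0)"
  proof -
    have "(mu - mp)*(mu - mm) = mu^2 - (mp + mm)*mu + mp*mm" by (simp add: algebra_simps power2_eq_square)
    also have "\<dots> = (mu^2 + R2) - cc*mu * s0" unfolding pm pp2 s0r cc_def by simp
    also have "\<dots> = cc*mu*(sv - s0)" using sdef by (simp add: algebra_simps)
    finally show ?thesis .
  qed
  define B where "B = 2*c*(c + a)*(2*c/a)/real n"
  have B0: "B \<ge> 0" unfolding B_def using cpos apos by simp
  have "cmod (mu - mp) * cmod (mu - mm) = c * (cmod mu * cmod (sv - s0))"
    using fac cpos unfolding cc_def by (metis norm_mult norm_of_real abs_of_pos mult.assoc)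
  also have "\<dots> \<le> c * (cmod mu * (2*(\<rho> - 1)))"
    using nds cpos by (intro mult_left_mono) auto
  also have "\<dots> = 2*c*(cmod mu * (\<rho> - 1))" by simp
  also have "\<dots> \<le> 2*c*((c+a)*(\<rho> - 1))"
  proof -
    have "cmod mu * (\<rho> - 1) \<le> (c+a)*(\<rho> - 1)" using disj rho1 by (auto intro: mult_right_mono)
    then show ?thesis using cpos by simp
  qed
  also have "\<dots> \<le> 2*c*((c+a)*((2*c/a)/real n))"
    using rd cpos apos by (intro mult_left_mono) auto
  also have "\<dots> = B" unfolding B_def by simp
  finally have PQ: "cmod (mu - mp) * cmod (mu - mm) \<le> B" .
  have disj2: "(cmod (mu - mp))^2 \<le> B \<or> (cmod (mu - mm))^2 \<le> B"
  proof (rule ccontr)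
    assume "\<not> ?thesis"
    then have a1: "B < (cmod (mu - mp))^2" and a2: "B < (cmod (mu - mm))^2" by auto
    have "B*B < (cmod (mu - mp))^2 * (cmod (mu - mm))^2"
      using a1 a2 B0 by (intro mult_strict_mono) auto
    moreover have "(cmod (mu - mp) * cmod (mu - mm))^2 \<le> B^2"
      using PQ by (intro power_mono) auto
    ultimately show False by (simp add: power2_eq_square power_mult_distrib algebra_simps)
  qed
  show ?thesis unfolding a_def[symmetric]
    using th disj2 unfolding B_def mp_def mm_def S_def by blast
qed

lemma TPS_even:
  assumes "p < N - 1" "j < 2*(N-1)"
  shows "TPS \<nu> lam dt N $$ (2*p, j) = (if j = 2*p+1 then C1 \<nu> lam dt else if j = 2*p+2 then C2 \<nu> lam dt else 0)"
proof -
  have i: "2*p < 2*(N-1)" using assms by simp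
  have "j = 2*(j div 2) + j mod 2" by simp
  then show ?thesis using assms i unfolding TPS_def
    by (auto simp: Let_def Td_def Tr_def Tl_def) presburger+
qed

lemma TPS_odd:
  assumes "p < N - 1" "j < 2*(N-1)"
  shows "TPS \<nu> lam dt N $$ (2*p+1, j) = (if j = 2*p then - \<nu> * C1 \<nu> lam dt else if j + 1 = 2*p then C2 \<nu> lam dt else 0)"
proof -
  have i: "2*p+1 < 2*(N-1)" using assms by simp
  then show ?thesis using assms i unfolding TPS_def
    by (auto simp: Let_def Td_def Tr_def Tl_def) presburger+
qed

lemma sum_two:
  fixes f :: "nat \<Rightarrow> complex"
  assumes "A \<noteq> B"
  shows "(\<Sum>j\<in>{0..<m}. (if j = A then \<alpha> else if j = B then \<beta> else 0) * f j)
       = (if A < m then \<alpha> * f A else 0) + (if B < m then \<beta> * f B else 0)"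
proof -
  have "(\<Sum>j\<in>{0..<m}. (if j = A then \<alpha> else if j = B then \<beta> else 0) * f j)
      = (\<Sum>j\<in>{0..<m}. (if j = A then \<alpha> * f A else 0) + (if j = B then \<beta> * f B else 0))"
    using assms by (intro sum.cong) auto
  also have "\<dots> = (\<Sum>j\<in>{0..<m}. (if j = A then \<alpha> * f A else 0)) + (\<Sum>j\<in>{0..<m}. (if j = B then \<beta> * f B else 0))"
    by (rule sum.distrib)
  also have "\<dots> = (if A < m then \<alpha> * f A else 0) + (if B < m then \<beta> * f B else 0)"
    by (simp add: sum.delta)
  finally show ?thesis .
qed

lemma sum_one:
  fixes f :: "nat \<Rightarrow> complex"
  shows "(\<Sum>j\<in>{0..<m}. (if j = A then \<alpha> else 0) * f j) = (if A < m then \<alpha> * f A else 0)"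
proof -
  have "(\<Sum>j\<in>{0..<m}. (if j = A then \<alpha> else 0) * f j) = (\<Sum>j\<in>{0..<m}. (if j = A then \<alpha> * f A else 0))"
    by (intro sum.cong) auto
  also have "\<dots> = (if A < m then \<alpha> * f A else 0)" by (simp add: sum.delta)
  finally show ?thesis .
qed

lemma consts_pos:
  assumes "\<nu> > 0" "dt > 0" "lam > 0"
  shows "C2 \<nu> lam dt > 0" "C1 \<nu> lam dt < 0"
proof -
  define \<sigma> where "\<sigma> = sigmaPS \<nu> lam"
  have sp: "\<sigma> > 0" unfolding \<sigma>_def sigmaPS_def using assms by (simp add: add_nonneg_pos)
  have sh: "sinh (\<sigma>*dt) > 0" using sp assms by simp
  have ch: "cosh (\<sigma>*dt) > 0" by simp
  have D: "\<sigma> * cosh (\<sigma> * dt) + lam * sinh (\<sigma> * dt) > 0" using sp sh ch assms by (simp add: add_pos_pos)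
  show "C2 \<nu> lam dt > 0" unfolding C2_def Let_def \<sigma>_def[symmetric] using sp D by simp
  have "0 < sinh (\<sigma> * dt) / (\<nu> * (\<sigma> * cosh (\<sigma> * dt) + lam * sinh (\<sigma> * dt)))"
    using sh D assms by (intro divide_pos_pos mult_pos_pos) auto
  then show "C1 \<nu> lam dt < 0" unfolding C1_def Let_def \<sigma>_def[symmetric] using D
    by simp
qed

lemma eig_in:
  fixes \<nu> dt lam :: real and N :: nat and \<mu> :: complex
  assumes pos: "\<nu> > 0" "dt > 0" "lam > 0" and N2: "N \<ge> 2"
  and root: "poly (char_poly (map_mat complex_of_real (TPS \<nu> lam dt N))) \<mu> = 0"
  shows "\<exists>\<theta>\<in>{-pi..pi}.
     (cmod (\<mu> - mu_plus \<nu> lam dt \<theta>))\<^sup>2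
        \<le> 2*C2 \<nu> lam dt*(C2 \<nu> lam dt + sqrt \<nu> * \<bar>C1 \<nu> lam dt\<bar>)*(2*C2 \<nu> lam dt/(sqrt \<nu> * \<bar>C1 \<nu> lam dt\<bar>))/real (N-1)
   \<or> (cmod (\<mu> - mu_minus \<nu> lam dt \<theta>))\<^sup>2
        \<le> 2*C2 \<nu> lam dt*(C2 \<nu> lam dt + sqrt \<nu> * \<bar>C1 \<nu> lam dt\<bar>)*(2*C2 \<nu> lam dt/(sqrt \<nu> * \<bar>C1 \<nu> lam dt\<bar>))/real (N-1)"
proof -
  define n where "n = N - 1"
  define m where "m = 2*n"
  define c where "c = C2 \<nu> lam dt"
  define C where "C = C1 \<nu> lam dt"
  have cpos: "c > 0" and Cneg: "C < 0" unfolding c_def C_def using consts_pos[OF pos] by auto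
  define T where "T = map_mat complex_of_real (TPS \<nu> lam dt N)"
  have Tc: "T \<in> carrier_mat m m" unfolding T_def m_def n_def TPS_def by simp
  have "eigenvalue T \<mu>" using eigenvalue_root_char_poly[OF Tc] root unfolding T_def by simp
  then obtain v where v: "v \<in> carrier_vec m" "v \<noteq> 0\<^sub>v m" "T *\<^sub>v v = \<mu> \<cdot>\<^sub>v v"
    unfolding eigenvalue_def eigenvector_def using Tc by auto
  have row: "\<mu> * v $ i = (\<Sum>j\<in>{0..<m}. complex_of_real (TPS \<nu> lam dt N $$ (i,j)) * v $ j)" if "i < m" for i
  proof -
    have "\<mu> * v $ i = (T *\<^sub>v v) $ i" using v(1,3) that by simp
    also have "\<dots> = scalar_prod (Matrix.row T i) v" using that Tc by simp
    also have "\<dots> = (\<Sum>j\<in>{0..<m}. Matrix.row T i $ j * v $ j)" unfolding scalar_prod_def using v(1) by simp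
    also have "\<dots> = (\<Sum>j\<in>{0..<m}. complex_of_real (TPS \<nu> lam dt N $$ (i,j)) * v $ j)"
      using that Tc unfolding T_def m_def n_def TPS_def by (intro sum.cong) auto
    finally show ?thesis .
  qed
  define x where "x p = v $ (2*p)" for p
  define y where "y p = v $ (2*p+1)" for p
  have E1: "\<mu> * x p = of_real C * y p + (if p+1 < n then of_real c * x (p+1) else 0)" if "p < n" for p
  proof -
    have "\<mu> * x p = (\<Sum>j\<in>{0..<m}. (if j = 2*p+1 then of_real C else if j = 2*p+2 then of_real c else 0) * v $ j)"
      unfolding x_def using row[of "2*p"] that
      by (simp add: m_def) (intro sum.cong, auto simp: TPS_even n_def m_def C_def c_def)
    also have "\<dots> = of_real C * y p + (if p+1 < n then of_real c * x (p+1) else 0)"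
      using that by (subst sum_two) (auto simp: x_def y_def m_def)
    finally show ?thesis .
  qed
  have E2: "\<mu> * y p = -(of_real \<nu> * of_real C) * x p + (if p > 0 then of_real c * y (p-1) else 0)" if "p < n" for p
  proof -
    have gen: "\<mu> * y p = (\<Sum>j\<in>{0..<m}. (if j = 2*p then of_real (-\<nu>*C) else if j+1 = 2*p then of_real c else 0) * v $ j)"
    proof -
      have "\<mu> * y p = (\<Sum>j\<in>{0..<m}. complex_of_real (TPS \<nu> lam dt N $$ (2*p+1, j)) * v $ j)"
        unfolding y_def using row[of "2*p+1"] that by (simp add: m_def)
      also have "\<dots> = (\<Sum>j\<in>{0..<m}. (if j = 2*p then of_real (-\<nu>*C) else if j+1 = 2*p then of_real c else 0) * v $ j)"
      proof (rule sum.cong[OF refl])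
        fix j assume "j \<in> {0..<m}"
        then have j: "j < 2*(N-1)" by (simp add: m_def n_def)
        have pN: "p < N - 1" using that by (simp add: n_def)
        have e: "TPS \<nu> lam dt N $$ (2*p+1, j) = (if j = 2*p then - \<nu> * C else if j + 1 = 2*p then c else 0)"
          using TPS_odd[OF pN j, of \<nu> lam dt] by (simp add: C_def c_def)
        show "complex_of_real (TPS \<nu> lam dt N $$ (2*p+1, j)) * v $ j =
          (if j = 2*p then of_real (-\<nu>*C) else if j+1 = 2*p then of_real c else 0) * v $ j"
          by (simp only: e) simp
      qed
      finally show ?thesis .
    qed
    show ?thesis
    proof (cases p)
      case 0
      have "\<mu> * y p = (\<Sum>j\<in>{0..<m}. (if j = 0 then of_real (-\<nu>*C) else 0) * v $ j)"
        unfolding gen using 0 by (intro sum.cong) auto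
      also have "\<dots> = -(of_real \<nu> * of_real C) * x p" using that 0 by (subst sum_one) (auto simp: x_def m_def)
      finally show ?thesis using 0 by simp
    next
      case (Suc q)
      have "\<mu> * y p = (\<Sum>j\<in>{0..<m}. (if j = 2*p then of_real (-\<nu>*C) else if j = 2*q+1 then of_real c else 0) * v $ j)"
        unfolding gen using Suc by (intro sum.cong) auto
      also have "\<dots> = -(of_real \<nu> * of_real C) * x p + of_real c * y q"
        using that Suc by (subst sum_two) (auto simp: x_def y_def m_def)
      finally show ?thesis using Suc by simp
    qed
  qed
  have nz: "\<exists>p<n. x p \<noteq> 0 \<or> y p \<noteq> 0"
  proof -
    obtain i where i: "i < m" "v $ i \<noteq> 0"
    proof (rule ccontr)
      assume "\<not> thesis"
      then have "\<forall>i<m. v $ i = 0" using that by blast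
      then have "v = 0\<^sub>v m" using v(1) by (intro eq_vecI) auto
      then show False using v(2) by simp
    qed
    define p where "p = i div 2"
    have pn: "p < n" using i(1) unfolding p_def m_def by simp
    have "i = 2*p \<or> i = 2*p+1" unfolding p_def by presburger
    then show ?thesis using i(2) pn unfolding x_def y_def by auto
  qed
  have n1: "n \<ge> 1" using N2 unfolding n_def by simp
  have "\<exists>\<theta>\<in>{-pi..pi}.
     (cmod (\<mu> - (complex_of_real (c * cos \<theta>) + \<i> * complex_of_real (sqrt ((c * sin \<theta>)\<^sup>2 + \<nu> * C\<^sup>2)))))\<^sup>2
        \<le> 2*c*(c + sqrt \<nu> * \<bar>C\<bar>)*(2*c/(sqrt \<nu> * \<bar>C\<bar>))/real n
   \<or> (cmod (\<mu> - (complex_of_real (c * cos \<theta>) - \<i> * complex_of_real (sqrt ((c * sin \<theta>)\<^sup>2 + \<nu> * C\<^sup>2)))))\<^sup>2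
        \<le> 2*c*(c + sqrt \<nu> * \<bar>C\<bar>)*(2*c/(sqrt \<nu> * \<bar>C\<bar>))/real n"
    by (rule eig_near[OF cpos _ pos(1) n1]) (use E1 E2 nz Cneg in auto)
  then show ?thesis unfolding mu_plus_def mu_minus_def c_def C_def n_def .
qed


theorem mainTheorem3:
  fixes \<nu> dt lam :: real
  assumes "\<nu> > 0" and "dt > 0" and "lam > 0"
  shows "\<forall>U :: complex set. open U \<and> SigmaPS \<nu> lam dt \<subseteq> U \<longrightarrow>
           (\<lambda>N. real (eig_count_outside (TPS \<nu> lam dt N) U)) \<in> o(\<lambda>N. real N)"
proof (intro allI impI)
  fix U :: "complex set"
  assume UU: "open U \<and> SigmaPS \<nu> lam dt \<subseteq> U"
  have cp: "continuous_on {-pi..pi} (mu_plus \<nu> lam dt)"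
    unfolding mu_plus_def by (intro continuous_intros)
  have cm: "continuous_on {-pi..pi} (mu_minus \<nu> lam dt)"
    unfolding mu_minus_def by (intro continuous_intros)
  have comp: "compact (SigmaPS \<nu> lam dt)" unfolding SigmaPS_def
    by (intro compact_Un compact_continuous_image cp cm compact_Icc)
  obtain \<epsilon> where ep: "\<epsilon> > 0" and eU: "(\<Union>x\<in>SigmaPS \<nu> lam dt. ball x \<epsilon>) \<subseteq> U"
    by (rule compact_subset_open_imp_ball_epsilon_subset[OF comp]) (use UU in auto)
  have eU': "\<forall>x\<in>SigmaPS \<nu> lam dt. ball x \<epsilon> \<subseteq> U" using eU by (simp only: UN_subset_iff)
  have eU': "\<forall>x\<in>SigmaPS \<nu> lam dt. ball x \<epsilon> \<subseteq> U" using eU by (simp only: UN_subset_iff)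
  define c where "c = C2 \<nu> lam dt"
  define C where "C = C1 \<nu> lam dt"
  have cpos: "c > 0" and Cneg: "C < 0" unfolding c_def C_def using consts_pos[OF assms] by auto
  define B where "B = 2*c*(c + sqrt \<nu> * \<bar>C\<bar>)*(2*c/(sqrt \<nu> * \<bar>C\<bar>))"
  have ap: "sqrt \<nu> * \<bar>C\<bar> > 0" using Cneg assms by (simp add: mult_pos_neg)
  have "B > 0" unfolding B_def
    by (intro mult_pos_pos divide_pos_pos add_pos_pos) (use cpos ap assms in auto)
  then have B0: "B \<ge> 0" by simp
  obtain K :: nat where K: "B / \<epsilon>^2 < real K" using reals_Archimedean2 by blast
  have ev: "eventually (\<lambda>N. eig_count_outside (TPS \<nu> lam dt N) U = 0) at_top"
  proof (rule eventually_at_top_linorderI[of "K + 2"])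
    fix N :: nat assume NK: "N \<ge> K + 2"
    have N2: "N \<ge> 2" using NK by simp
    have small: "B / real (N-1) < \<epsilon>^2"
    proof -
      have "real K < real (N-1)" using NK by simp
      with K have "B / \<epsilon>^2 < real (N-1)" by (rule less_trans)
      moreover have e2: "\<epsilon>^2 > 0" using ep by simp
      ultimately have "B < real (N-1) * \<epsilon>^2" by (simp add: divide_less_eq)
      moreover have "real (N-1) > 0" using N2 by simp
      ultimately show ?thesis by (simp add: divide_less_eq mult.commute)
    qed
    have inU: "z \<in> U" if z: "poly (char_poly (map_mat complex_of_real (TPS \<nu> lam dt N))) z = 0" for z
    proof -
      have "\<exists>\<theta>\<in>{-pi..pi}. (cmod (z - mu_plus \<nu> lam dt \<theta>))\<^sup>2 \<le> B/real (N-1) \<or> (cmod (z - mu_minus \<nu> lam dt \<theta>))\<^sup>2 \<le> B/real (N-1)"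
        using eig_in[OF assms N2 z] unfolding B_def c_def C_def .
      then obtain \<theta> where th: "\<theta> \<in> {-pi..pi}" and
        d: "(cmod (z - mu_plus \<nu> lam dt \<theta>))\<^sup>2 \<le> B/real (N-1) \<or> (cmod (z - mu_minus \<nu> lam dt \<theta>))\<^sup>2 \<le> B/real (N-1)"
        by (rule bexE)
      have bl: "z \<in> U" if m: "w \<in> SigmaPS \<nu> lam dt" and le: "(cmod (z - w))\<^sup>2 \<le> B/real (N-1)" for w
      proof -
        have "(cmod (z - w))\<^sup>2 < \<epsilon>\<^sup>2" using le small by (rule le_less_trans)
        then have "cmod (z - w) < \<epsilon>" by (rule power_less_imp_less_base) (use ep in simp)
        then have "dist w z < \<epsilon>" by (simp only: dist_norm norm_minus_commute)
        then have zb: "z \<in> ball w \<epsilon>" by (simp only: mem_ball)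
        have "ball w \<epsilon> \<subseteq> U" using eU' m by blast
        then show ?thesis using zb by blast
      qed
      have m1: "mu_plus \<nu> lam dt \<theta> \<in> SigmaPS \<nu> lam dt" unfolding SigmaPS_def using th by blast
      have m2: "mu_minus \<nu> lam dt \<theta> \<in> SigmaPS \<nu> lam dt" unfolding SigmaPS_def using th by blast
      show ?thesis using d bl[OF m1] bl[OF m2] by blast
    qed
    then have E: "{z. poly (char_poly (map_mat complex_of_real (TPS \<nu> lam dt N))) z = 0 \<and> z \<notin> U} = {}" by blast
    show "eig_count_outside (TPS \<nu> lam dt N) U = 0" by (simp only: eig_count_outside_def Let_def E sum.empty)
  qed
  show "(\<lambda>N. real (eig_count_outside (TPS \<nu> lam dt N) U)) \<in> o(\<lambda>N. real N)"
  proof (rule landau_o.smallI)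
    fix c :: real assume "c > 0"
    show "eventually (\<lambda>N. norm (real (eig_count_outside (TPS \<nu> lam dt N) U)) \<le> c * norm (real N)) at_top"
      using ev by (rule eventually_mono) (use \<open>c > 0\<close> in simp)
  qed
qed

end
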